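(* If the bivariate random vector $(X,Y)$ is exchangeable, i.e. $(X,Y)\overset{d}{=}(Y,X)$, then $$|\max(X,-Y)|\overset{d}{=}|\min(X,-Y)|\overset{d}{=}|X|\overset{d}{=}|Y|.$$
   Context: $\overset{d}{=}$ denotes equality in distribution. *)

theory Defs
  imports "HOL-Probability.Probability"
begin

end

theory Submission
  imports Defs
begin

lemma swap_distr:
  fixes M :: "'a measure" and X Y :: "'a \<Rightarrow> real"
  assumes "X \<in> borel_measurable M" and "Y \<in> borel_measurable M"
    and exch: "distr M (borel \<Otimes>\<^sub>M borel) (\<lambda>\<omega>. (X \<omega>, Y \<omega>))
             = distr M (borel \<Otimes>\<^sub>M borel) (\<lambda>\<omega>. (Y \<omega>, X \<omega>))"
    and g: "g \<in> borel_measurable (borel \<Otimes>\<^sub>M borel)"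
  shows "distr M borel (\<lambda>\<omega>. g (X \<omega>, Y \<omega>)) = distr M borel (\<lambda>\<omega>. g (Y \<omega>, X \<omega>))"
proof -
  have m1: "(\<lambda>\<omega>. (X \<omega>, Y \<omega>)) \<in> measurable M (borel \<Otimes>\<^sub>M borel)" using assms by measurable
  have m2: "(\<lambda>\<omega>. (Y \<omega>, X \<omega>)) \<in> measurable M (borel \<Otimes>\<^sub>M borel)" using assms by measurable
  have "distr M borel (\<lambda>\<omega>. g (X \<omega>, Y \<omega>)) = distr (distr M (borel \<Otimes>\<^sub>M borel) (\<lambda>\<omega>. (X \<omega>, Y \<omega>))) borel g"
    using distr_distr[OF g m1] by (simp add: comp_def)
  also have "\<dots> = distr (distr M (borel \<Otimes>\<^sub>M borel) (\<lambda>\<omega>. (Y \<omega>, X \<omega>))) borel g" using exch by simp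
  also have "\<dots> = distr M borel (\<lambda>\<omega>. g (Y \<omega>, X \<omega>))"
    using distr_distr[OF g m2] by (simp add: comp_def)
  finally show ?thesis .
qed

theorem corollary2p13:
  fixes M :: "'a measure" and X Y :: "'a \<Rightarrow> real"
  assumes "prob_space M"
    and "X \<in> borel_measurable M" and "Y \<in> borel_measurable M"
    and exch: "distr M (borel \<Otimes>\<^sub>M borel) (\<lambda>\<omega>. (X \<omega>, Y \<omega>))
             = distr M (borel \<Otimes>\<^sub>M borel) (\<lambda>\<omega>. (Y \<omega>, X \<omega>))"
  shows "distr M borel (\<lambda>\<omega>. \<bar>max (X \<omega>) (- Y \<omega>)\<bar>) = distr M borel (\<lambda>\<omega>. \<bar>min (X \<omega>) (- Y \<omega>)\<bar>)
       \<and> distr M borel (\<lambda>\<omega>. \<bar>min (X \<omega>) (- Y \<omega>)\<bar>) = distr M borel (\<lambda>\<omega>. \<bar>X \<omega>\<bar>)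
       \<and> distr M borel (\<lambda>\<omega>. \<bar>X \<omega>\<bar>) = distr M borel (\<lambda>\<omega>. \<bar>Y \<omega>\<bar>)"
proof -
  interpret prob_space M by fact
  have c1: "distr M borel (\<lambda>\<omega>. \<bar>max (X \<omega>) (- Y \<omega>)\<bar>) = distr M borel (\<lambda>\<omega>. \<bar>min (X \<omega>) (- Y \<omega>)\<bar>)"
  proof -
    have "distr M borel (\<lambda>\<omega>. (\<lambda>p. \<bar>max (fst p) (- snd p)\<bar>) (X \<omega>, Y \<omega>))
        = distr M borel (\<lambda>\<omega>. (\<lambda>p. \<bar>max (fst p) (- snd p)\<bar>) (Y \<omega>, X \<omega>))"
      by (rule swap_distr[OF assms(2,3) exch]) measurable
    moreover have "(\<lambda>\<omega>. \<bar>max (Y \<omega>) (- X \<omega>)\<bar>) = (\<lambda>\<omega>. \<bar>min (X \<omega>) (- Y \<omega>)\<bar>)"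
      by (auto simp: max_def min_def)
    ultimately show ?thesis by simp
  qed
  have c3: "distr M borel (\<lambda>\<omega>. \<bar>X \<omega>\<bar>) = distr M borel (\<lambda>\<omega>. \<bar>Y \<omega>\<bar>)"
  proof -
    have "distr M borel (\<lambda>\<omega>. (\<lambda>p. \<bar>fst p\<bar>) (X \<omega>, Y \<omega>))
        = distr M borel (\<lambda>\<omega>. (\<lambda>p. \<bar>fst p\<bar>) (Y \<omega>, X \<omega>))"
      by (rule swap_distr[OF assms(2,3) exch]) measurable
    then show ?thesis by simp
  qed
  have mX: "(\<lambda>\<omega>. \<bar>X \<omega>\<bar>) \<in> borel_measurable M" using assms by measurable
  have mY: "(\<lambda>\<omega>. \<bar>Y \<omega>\<bar>) \<in> borel_measurable M" using assms by measurable
  have mMin: "(\<lambda>\<omega>. \<bar>min (X \<omega>) (- Y \<omega>)\<bar>) \<in> borel_measurable M" using assms by measurable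
  have mMax: "(\<lambda>\<omega>. \<bar>max (X \<omega>) (- Y \<omega>)\<bar>) \<in> borel_measurable M" using assms by measurable
  have c2: "distr M borel (\<lambda>\<omega>. \<bar>min (X \<omega>) (- Y \<omega>)\<bar>) = distr M borel (\<lambda>\<omega>. \<bar>X \<omega>\<bar>)"
  proof (rule measure_eqI)
    fix A :: "real set" assume A: "A \<in> sets (distr M borel (\<lambda>\<omega>. \<bar>min (X \<omega>) (- Y \<omega>)\<bar>))"
    hence Ab: "A \<in> sets borel" by simp
    define a where "a f = measure M (f -` A \<inter> space M)" for f :: "'a \<Rightarrow> real"
    have eqd: "a f = a g" if "distr M borel f = distr M borel g" "f \<in> borel_measurable M" "g \<in> borel_measurable M" for f g
    proof -
      have "emeasure (distr M borel f) A = emeasure (distr M borel g) A" using that by simp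
      hence "emeasure M (f -` A \<inter> space M) = emeasure M (g -` A \<inter> space M)"
        using that Ab emeasure_distr[OF that(2) Ab] emeasure_distr[OF that(3) Ab] by simp
      thus ?thesis unfolding a_def by (simp add: emeasure_eq_measure)
    qed
    have ai: "a f = integral\<^sup>L M (\<lambda>\<omega>. indicator A (f \<omega>))" if "f \<in> borel_measurable M" for f
    proof -
      have s: "f -` A \<inter> space M \<in> sets M" using that Ab by measurable
      have "integral\<^sup>L M (\<lambda>\<omega>. indicator A (f \<omega>)) = integral\<^sup>L M (indicator (f -` A \<inter> space M) :: 'a \<Rightarrow> real)"
        by (rule Bochner_Integration.integral_cong) (auto simp: indicator_def)
      also have "\<dots> = a f" using s unfolding a_def by simp
      finally show ?thesis by simp
    qed
    have int: "integrable M (\<lambda>\<omega>. indicator A (f \<omega>) :: real)" if "f \<in> borel_measurable M" for f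
    proof -
      have s: "f -` A \<inter> space M \<in> sets M" using that Ab by measurable
      have "integrable M (indicator (f -` A \<inter> space M) :: 'a \<Rightarrow> real)" using s by (simp add: integrable_indicator_iff emeasure_eq_measure)
      moreover have "integrable M (indicator (f -` A \<inter> space M) :: 'a \<Rightarrow> real) = integrable M (\<lambda>\<omega>. indicator A (f \<omega>) :: real)"
        by (rule Bochner_Integration.integrable_cong) (auto simp: indicator_def)
      ultimately show ?thesis by simp
    qed
    have pt: "indicator A \<bar>min (X \<omega>) (- Y \<omega>)\<bar> + indicator A \<bar>max (X \<omega>) (- Y \<omega>)\<bar>
        = (indicator A \<bar>X \<omega>\<bar> + indicator A \<bar>Y \<omega>\<bar> :: real)" for \<omega>
      by (cases "X \<omega> \<le> - Y \<omega>") (auto simp: min_def max_def)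
    have "a (\<lambda>\<omega>. \<bar>min (X \<omega>) (- Y \<omega>)\<bar>) + a (\<lambda>\<omega>. \<bar>max (X \<omega>) (- Y \<omega>)\<bar>)
        = a (\<lambda>\<omega>. \<bar>X \<omega>\<bar>) + a (\<lambda>\<omega>. \<bar>Y \<omega>\<bar>)"
      using pt int[OF mMin] int[OF mMax] int[OF mX] int[OF mY]
      by (simp add: ai mMin mMax mX mY flip: Bochner_Integration.integral_add)
    moreover have "a (\<lambda>\<omega>. \<bar>max (X \<omega>) (- Y \<omega>)\<bar>) = a (\<lambda>\<omega>. \<bar>min (X \<omega>) (- Y \<omega>)\<bar>)"
      by (rule eqd[OF c1 mMax mMin])
    moreover have "a (\<lambda>\<omega>. \<bar>X \<omega>\<bar>) = a (\<lambda>\<omega>. \<bar>Y \<omega>\<bar>)" by (rule eqd[OF c3 mX mY])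
    ultimately have "a (\<lambda>\<omega>. \<bar>min (X \<omega>) (- Y \<omega>)\<bar>) = a (\<lambda>\<omega>. \<bar>X \<omega>\<bar>)" by simp
    thus "emeasure (distr M borel (\<lambda>\<omega>. \<bar>min (X \<omega>) (- Y \<omega>)\<bar>)) A = emeasure (distr M borel (\<lambda>\<omega>. \<bar>X \<omega>\<bar>)) A"
      using Ab mMin mX unfolding a_def by (simp add: emeasure_distr emeasure_eq_measure)
  qed simp
  show ?thesis using c1 c2 c3 by simp
qed

end
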